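(* Let $\lambda>1$ and $g_\lambda(x)=\frac{x^{\lambda}\Gamma(x)}{\Gamma(\lambda+x)}$, $x>0$. Then $g_\lambda\in\mathcal T_{\lambda-1,-3}$.
   Context: $\gamma(\beta,x)=\int_0^x e^{-t}t^{\beta-1}\,dt$ is the incomplete gamma function. A function $\varphi$ on $(0,\infty)$ is completely monotonic of order $\alpha$ if $x^{\alpha}\varphi(x)$ is completely monotonic. For $\beta>0$ and $\alpha<\beta+1$, $\mathcal T_{\beta,\alpha}$ is the class of functions of the form $f(x)=ax^{\beta}+b+\int_0^\infty\gamma(\beta,xt)\varphi(t)\,dt$, $x>0$, with $a,b\ge 0$ and $\varphi$ completely monotonic of order $\alpha$. *)

theory Defs
  imports "HOL-Analysis.Analysis"
begin

definition completely_monotonic :: "(real \<Rightarrow> real) \<Rightarrow> bool" where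
  "completely_monotonic f \<longleftrightarrow>
     (\<forall>n. \<forall>x>0. ((deriv ^^ n) f has_real_derivative (deriv ^^ Suc n) f x) (at x)
                 \<and> (-1) ^ n * (deriv ^^ n) f x \<ge> 0)"

definition completely_monotonic_order :: "real \<Rightarrow> (real \<Rightarrow> real) \<Rightarrow> bool" where
  "completely_monotonic_order \<alpha> \<phi> \<longleftrightarrow> completely_monotonic (\<lambda>x. x powr \<alpha> * \<phi> x)"

definition lower_inc_gamma :: "real \<Rightarrow> real \<Rightarrow> real" where
  "lower_inc_gamma \<beta> x = integral {0..x} (\<lambda>t. exp (- t) * t powr (\<beta> - 1))"

definition T_class :: "real \<Rightarrow> real \<Rightarrow> (real \<Rightarrow> real) set" where
  "T_class \<beta> \<alpha> = {f. \<exists>a b \<phi>. a \<ge> 0 \<and> b \<ge> 0 \<and> completely_monotonic_order \<alpha> \<phi> \<and>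
      (\<forall>x>0. ((\<lambda>t. lower_inc_gamma \<beta> (x * t) * \<phi> t) has_integral
                 (f x - a * x powr \<beta> - b)) {0<..})}"

end

theory Submission
  imports Defs "HOL-Real_Asymp.Real_Asymp"
begin


coinductive cm :: "(real \<Rightarrow> real) \<Rightarrow> bool" where
  cmI: "(\<forall>x>0. f x \<ge> 0) \<Longrightarrow> (\<forall>x>0. (f has_real_derivative f' x) (at x)) \<Longrightarrow> cm (\<lambda>x. - f' x) \<Longrightarrow> cm f"

lemma cm_closure:
  assumes "P f"
    and "\<And>g. P g \<Longrightarrow> (\<forall>x>0. g x \<ge> 0) \<and> (\<exists>g'. (\<forall>x>0. (g has_real_derivative g' x) (at x)) \<and> P (\<lambda>x. - g' x))"
  shows "cm f"
  using assms(1)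
proof (coinduction arbitrary: f rule: cm.coinduct)
  case (cm f)
  then show ?case using assms(2)[of f] by blast
qed

lemma cm_nonneg: "cm f \<Longrightarrow> x > 0 \<Longrightarrow> f x \<ge> 0"
  by (auto elim: cm.cases)

lemma cm_deriv: "cm f \<Longrightarrow> \<exists>f'. (\<forall>x>0. (f has_real_derivative f' x) (at x)) \<and> cm (\<lambda>x. - f' x)"
  by (erule cm.cases) blast

lemma cm_cong:
  assumes "cm f" "\<And>x. x > 0 \<Longrightarrow> f x = g x"
  shows "cm g"
proof -
  have "\<exists>f. cm f \<and> (\<forall>x>0. f x = g x)" using assms by blast
  then show ?thesis
  proof (rule cm_closure[where P="\<lambda>g. \<exists>f. cm f \<and> (\<forall>x>0. f x = g x)"])
    fix h assume "\<exists>f. cm f \<and> (\<forall>x>0. f x = h x)"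
    then obtain f where f: "cm f" "\<forall>x>0. f x = h x" by blast
    obtain f' where f': "\<forall>x>0. (f has_real_derivative f' x) (at x)" "cm (\<lambda>x. - f' x)"
      using cm_deriv[OF f(1)] by blast
    have "\<forall>x>0. (h has_real_derivative f' x) (at x)"
    proof (intro allI impI)
      fix x :: real assume x: "x > 0"
      show "(h has_real_derivative f' x) (at x)"
        by (rule has_field_derivative_transform_within_open[OF f'(1)[rule_format, OF x], of "{0<..}"])
           (use x f(2) in auto)
    qed
    moreover have "\<forall>x>0. h x \<ge> 0" using f cm_nonneg by metis
    moreover have "\<exists>f. cm f \<and> (\<forall>x>0. f x = - f' x)" using f'(2) by blast
    ultimately show "(\<forall>x>0. h x \<ge> 0) \<and> (\<exists>g'. (\<forall>x>0. (h has_real_derivative g' x) (at x)) \<and> (\<exists>f. cm f \<and> (\<forall>x>0. f x = - g' x)))"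
      by blast
  qed
qed

lemma cm_const: "c \<ge> 0 \<Longrightarrow> cm (\<lambda>x. c)"
proof -
  assume "c \<ge> 0"
  then have "\<exists>d\<ge>0. (\<lambda>x::real. c) = (\<lambda>x. d)" by blast
  then show ?thesis
  proof (rule cm_closure[where P="\<lambda>g. \<exists>c\<ge>0. g = (\<lambda>x. c)"])
    fix g :: "real \<Rightarrow> real" assume "\<exists>c\<ge>0. g = (\<lambda>x. c)"
    then obtain c where c: "c \<ge> 0" "g = (\<lambda>x. c)" by blast
    show "(\<forall>x>0. g x \<ge> 0) \<and> (\<exists>g'. (\<forall>x>0. (g has_real_derivative g' x) (at x)) \<and> (\<exists>c\<ge>0. (\<lambda>x. - g' x) = (\<lambda>x. c)))"
      using c by (intro conjI exI[of _ "\<lambda>x. 0"]) (auto intro!: derivative_eq_intros)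
  qed
qed

lemma cm_add:
  assumes "cm f" "cm g" shows "cm (\<lambda>x. f x + g x)"
proof -
  have "\<exists>a b. cm a \<and> cm b \<and> (\<lambda>x. f x + g x) = (\<lambda>x. a x + b x)" using assms by blast
  then show ?thesis
  proof (rule cm_closure[where P="\<lambda>h. \<exists>f g. cm f \<and> cm g \<and> h = (\<lambda>x. f x + g x)"])
    fix h assume "\<exists>f g. cm f \<and> cm g \<and> h = (\<lambda>x. f x + g x)"
    then obtain f g where fg: "cm f" "cm g" "h = (\<lambda>x. f x + g x)" by blast
    obtain f' where f': "\<forall>x>0. (f has_real_derivative f' x) (at x)" "cm (\<lambda>x. - f' x)"
      using cm_deriv[OF fg(1)] by blast
    obtain g' where g': "\<forall>x>0. (g has_real_derivative g' x) (at x)" "cm (\<lambda>x. - g' x)"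
      using cm_deriv[OF fg(2)] by blast
    have 1: "\<forall>x>0. 0 \<le> h x" using fg cm_nonneg by (simp add: add_nonneg_nonneg)
    have 2: "\<forall>x>0. (h has_real_derivative f' x + g' x) (at x)"
      using f' g' fg(3) by (auto intro!: derivative_eq_intros)
    have 3: "(\<lambda>x. - (f' x + g' x)) = (\<lambda>x. (- f' x) + (- g' x))" by auto
    show "(\<forall>x>0. h x \<ge> 0) \<and> (\<exists>h'. (\<forall>x>0. (h has_real_derivative h' x) (at x)) \<and> (\<exists>f g. cm f \<and> cm g \<and> (\<lambda>x. - h' x) = (\<lambda>x. f x + g x)))"
      apply (rule conjI[OF 1])
      apply (rule exI[where x="\<lambda>x. f' x + g' x"])
      apply (rule conjI[OF 2])
      apply (rule exI[where x="\<lambda>x. - f' x"])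
      apply (rule exI[where x="\<lambda>x. - g' x"])
      using f'(2) g'(2) 3 by simp
  qed
qed

inductive sp :: "(real \<Rightarrow> real) \<Rightarrow> bool" where
  sp_mult: "cm f \<Longrightarrow> cm g \<Longrightarrow> sp (\<lambda>x. f x * g x)"
| sp_add: "sp f \<Longrightarrow> sp g \<Longrightarrow> sp (\<lambda>x. f x + g x)"

lemma sp_step:
  assumes "sp h"
  shows "(\<forall>x>0. h x \<ge> 0) \<and> (\<exists>h'. (\<forall>x>0. (h has_real_derivative h' x) (at x)) \<and> sp (\<lambda>x. - h' x))"
  using assms
proof induction
  case (sp_mult f g)
  obtain f' where f': "\<forall>x>0. (f has_real_derivative f' x) (at x)" "cm (\<lambda>x. - f' x)"
    using cm_deriv[OF sp_mult(1)] by blast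
  obtain g' where g': "\<forall>x>0. (g has_real_derivative g' x) (at x)" "cm (\<lambda>x. - g' x)"
    using cm_deriv[OF sp_mult(2)] by blast
  have "sp (\<lambda>x. (- f' x) * g x + f x * (- g' x))"
    by (rule sp.sp_add[OF sp.sp_mult[OF f'(2) sp_mult(2)] sp.sp_mult[OF sp_mult(1) g'(2)]])
  moreover have "(\<lambda>x. (- f' x) * g x + f x * (- g' x)) = (\<lambda>x. - (f' x * g x + f x * g' x))"
    by (simp add: fun_eq_iff algebra_simps)
  ultimately have "sp (\<lambda>x. - (f' x * g x + f x * g' x))" by simp
  moreover have "\<forall>x>0. ((\<lambda>x. f x * g x) has_real_derivative (f' x * g x + f x * g' x)) (at x)"
    using f' g' by (auto intro!: derivative_eq_intros)
  moreover have "\<forall>x>0. f x * g x \<ge> 0" using sp_mult cm_nonneg by simp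
  ultimately show ?case by (intro conjI exI[where x="\<lambda>x. f' x * g x + f x * g' x"]) auto
next
  case (sp_add f g)
  then obtain f' g' where f': "\<forall>x>0. (f has_real_derivative f' x) (at x)" "sp (\<lambda>x. - f' x)"
    and g': "\<forall>x>0. (g has_real_derivative g' x) (at x)" "sp (\<lambda>x. - g' x)" by blast
  have "sp (\<lambda>x. (- f' x) + (- g' x))" by (rule sp.sp_add[OF f'(2) g'(2)])
  then have "sp (\<lambda>x. - (f' x + g' x))" by simp
  moreover have "\<forall>x>0. ((\<lambda>x. f x + g x) has_real_derivative (f' x + g' x)) (at x)"
    using f' g' by (auto intro!: derivative_eq_intros)
  moreover have "\<forall>x>0. f x + g x \<ge> 0" using sp_add by simp
  ultimately show ?case by (intro conjI exI[where x="\<lambda>x. f' x + g' x"]) auto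
qed

lemma cm_mult:
  assumes "cm f" "cm g" shows "cm (\<lambda>x. f x * g x)"
  using sp.sp_mult[OF assms] by (rule cm_closure[where P=sp]) (rule sp_step)

lemma cm_power: "cm f \<Longrightarrow> cm (\<lambda>x. f x ^ n)"
proof (induction n)
  case 0 then show ?case using cm_const[of 1] by simp
next
  case (Suc n) then show ?case using cm_mult[of f "\<lambda>x. f x ^ n"] by simp
qed

lemma cm_exp: assumes "c \<ge> 0" shows "cm (\<lambda>x. exp (- c * x))"
proof -
  have "\<exists>a\<ge>0. (\<lambda>x. exp (- c * x)) = (\<lambda>x. a * exp (- c * x))" by (intro exI[of _ 1]) auto
  then show ?thesis
  proof (rule cm_closure[where P="\<lambda>g. \<exists>a\<ge>0. g = (\<lambda>x. a * exp (- c * x))"])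
    fix g :: "real \<Rightarrow> real" assume "\<exists>a\<ge>0. g = (\<lambda>x. a * exp (- c * x))"
    then obtain a where a: "a \<ge> 0" "g = (\<lambda>x. a * exp (- c * x))" by blast
    have d: "\<forall>x>0. (g has_real_derivative a * (exp (- c * x) * (- c))) (at x)"
      using a by (auto intro!: derivative_eq_intros)
    have 1: "(\<lambda>x. - (a * (exp (- c * x) * (- c)))) = (\<lambda>x. (a * c) * exp (- c * x))"
      by (simp add: fun_eq_iff)
    show "(\<forall>x>0. g x \<ge> 0) \<and> (\<exists>g'. (\<forall>x>0. (g has_real_derivative g' x) (at x)) \<and> (\<exists>a\<ge>0. (\<lambda>x. - g' x) = (\<lambda>x. a * exp (- c * x))))"
    proof -
      have 2: "a * c \<ge> 0" using a assms by auto
      have 3: "\<forall>x>0. g x \<ge> 0" using a by auto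
      show ?thesis
        apply (rule conjI[OF 3])
        apply (rule exI, rule conjI[OF d])
        using 1 2 by auto
    qed
  qed
qed

lemma cm_powr: assumes "e \<ge> 0" shows "cm (\<lambda>x. x powr (- e))"
proof -
  have "\<exists>a\<ge>0. \<exists>d\<ge>0. (\<lambda>x::real. x powr (- e)) = (\<lambda>x. a * x powr (- d))"
    using assms by (intro exI[of _ 1] exI[of _ e]) auto
  then show ?thesis
  proof (rule cm_closure[where P="\<lambda>g. \<exists>a\<ge>0. \<exists>e\<ge>0. g = (\<lambda>x. a * x powr (- e))"])
    fix g :: "real \<Rightarrow> real" assume "\<exists>a\<ge>0. \<exists>e\<ge>0. g = (\<lambda>x. a * x powr (- e))"
    then obtain a e where a: "a \<ge> 0" "e \<ge> 0" "g = (\<lambda>x. a * x powr (- e))" by blast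
    have d: "\<forall>x>0. (g has_real_derivative a * (- e * x powr (- e - 1))) (at x)"
      using a by (auto intro!: derivative_eq_intros simp: powr_diff)
    have 1: "(\<lambda>x. - (a * (- e * x powr (- e - 1)))) = (\<lambda>x. (a * e) * x powr (- (e + 1)))"
      using minus_add_distrib[of e 1] by (simp add: fun_eq_iff)
    show "(\<forall>x>0. g x \<ge> 0) \<and> (\<exists>g'. (\<forall>x>0. (g has_real_derivative g' x) (at x)) \<and> (\<exists>a\<ge>0. \<exists>e\<ge>0. (\<lambda>x. - g' x) = (\<lambda>x. a * x powr (- e))))"
    proof -
      have 2: "a * e \<ge> 0" "e + 1 \<ge> 0" using a by auto
      have 3: "\<forall>x>0. g x \<ge> 0" using a by auto
      show ?thesis
        apply (rule conjI[OF 3])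
        apply (rule exI, rule conjI[OF d])
        apply (rule exI[where x="a*e"], rule conjI[OF 2(1)])
        apply (rule exI[where x="e+1"], rule conjI[OF 2(2)])
        using 1 by simp
    qed
  qed
qed



inductive sc :: "(real \<Rightarrow> real) \<Rightarrow> (real \<Rightarrow> real) \<Rightarrow> bool" for g where
  sc_base: "cm f \<Longrightarrow> cm k \<Longrightarrow> sc g (\<lambda>x. f (g x) * k x)"
| sc_add: "sc g h1 \<Longrightarrow> sc g h2 \<Longrightarrow> sc g (\<lambda>x. h1 x + h2 x)"

lemma sc_step:
  assumes "sc g h"
    and gpos: "\<forall>x>0. g x > 0"
    and gd: "\<forall>x>0. (g has_real_derivative g' x) (at x)"
    and gcm: "cm g'"
  shows "(\<forall>x>0. h x \<ge> 0) \<and> (\<exists>h'. (\<forall>x>0. (h has_real_derivative h' x) (at x)) \<and> sc g (\<lambda>x. - h' x))"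
  using assms(1)
proof induction
  case (sc_base f k)
  obtain f' where f': "\<forall>x>0. (f has_real_derivative f' x) (at x)" "cm (\<lambda>x. - f' x)"
    using cm_deriv[OF sc_base(1)] by blast
  obtain k' where k': "\<forall>x>0. (k has_real_derivative k' x) (at x)" "cm (\<lambda>x. - k' x)"
    using cm_deriv[OF sc_base(2)] by blast
  have gk: "cm (\<lambda>x. g' x * k x)" by (rule cm_mult[OF gcm sc_base(2)])
  have "sc g (\<lambda>x. (- f' (g x)) * (g' x * k x) + f (g x) * (- k' x))"
    by (rule sc.sc_add[OF sc.sc_base[OF f'(2) gk] sc.sc_base[OF sc_base(1) k'(2)]])
  moreover have "(\<lambda>x. (- f' (g x)) * (g' x * k x) + f (g x) * (- k' x)) = (\<lambda>x. - (f' (g x) * g' x * k x + f (g x) * k' x))"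
    by (simp add: fun_eq_iff algebra_simps)
  ultimately have 1: "sc g (\<lambda>x. - (f' (g x) * g' x * k x + f (g x) * k' x))" by simp
  have 2: "\<forall>x>0. ((\<lambda>x. f (g x) * k x) has_real_derivative (f' (g x) * g' x * k x + f (g x) * k' x)) (at x)"
  proof (intro allI impI)
    fix x :: real assume x: "x > 0"
    have fg: "((\<lambda>x. f (g x)) has_real_derivative f' (g x) * g' x) (at x)"
      by (rule DERIV_chain2[OF f'(1)[rule_format] gd[rule_format]]) (use x gpos in auto)
    then show "((\<lambda>x. f (g x) * k x) has_real_derivative (f' (g x) * g' x * k x + f (g x) * k' x)) (at x)"
      using DERIV_mult[OF fg k'(1)[rule_format, OF x]] by (simp add: algebra_simps)
  qed
  have 3: "\<forall>x>0. f (g x) * k x \<ge> 0" using sc_base cm_nonneg gpos by simp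
  show ?case using 1 2 3 by (intro conjI exI[where x="\<lambda>x. f' (g x) * g' x * k x + f (g x) * k' x"]) auto
next
  case (sc_add f g2)
  then obtain f' g2' where f': "\<forall>x>0. (f has_real_derivative f' x) (at x)" "sc g (\<lambda>x. - f' x)"
    and g2': "\<forall>x>0. (g2 has_real_derivative g2' x) (at x)" "sc g (\<lambda>x. - g2' x)" by blast
  have "sc g (\<lambda>x. (- f' x) + (- g2' x))" by (rule sc.sc_add[OF f'(2) g2'(2)])
  then have "sc g (\<lambda>x. - (f' x + g2' x))" by simp
  moreover have "\<forall>x>0. ((\<lambda>x. f x + g2 x) has_real_derivative (f' x + g2' x)) (at x)"
    using f' g2' by (auto intro!: derivative_eq_intros)
  moreover have "\<forall>x>0. f x + g2 x \<ge> 0" using sc_add by simp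
  ultimately show ?case by (intro conjI exI[where x="\<lambda>x. f' x + g2' x"]) auto
qed

lemma cm_compose:
  assumes f: "cm f" and gpos: "\<forall>x>0. g x > 0"
    and gd: "\<forall>x>0. (g has_real_derivative g' x) (at x)" and gcm: "cm g'"
  shows "cm (\<lambda>x. f (g x))"
proof -
  have "sc g (\<lambda>x. f (g x) * 1)" by (rule sc.sc_base[OF f cm_const]) simp
  then have "sc g (\<lambda>x. f (g x))" by simp
  then show ?thesis
    by (rule cm_closure[where P="sc g"]) (rule sc_step[OF _ gpos gd gcm])
qed

lemma cm_laplace01:
  assumes rc: "continuous_on {0..1} \<rho>" and rn: "\<forall>u\<in>{0..1}. \<rho> u \<ge> 0"
  shows "cm (\<lambda>t. integral {0..1} (\<lambda>u. \<rho> u * exp (- t * u)))"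
proof -
  define F where "F j = (\<lambda>t. integral {0..1} (\<lambda>u. \<rho> u * u ^ j * exp (- t * u)))" for j :: nat
  have "F 0 = (\<lambda>t. integral {0..1} (\<lambda>u. \<rho> u * exp (- t * u)))" by (simp add: F_def)
  then have "\<exists>j. (\<lambda>t. integral {0..1} (\<lambda>u. \<rho> u * exp (- t * u))) = F j" by metis
  then show ?thesis
  proof (rule cm_closure[where P="\<lambda>h. \<exists>j. h = F j"])
    fix h assume "\<exists>j. h = F j"
    then obtain j where j: "h = F j" by blast
    have cont: "continuous_on {0..1} (\<lambda>u. \<rho> u * u ^ j * exp (- t * u))" for t j
      by (intro continuous_intros rc)
    have nn: "\<forall>t>0. h t \<ge> 0"
    proof (intro allI impI)
      fix t :: real assume "t > 0"
      have "(\<lambda>u. \<rho> u * u ^ j * exp (- t * u)) integrable_on {0..1}"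
        by (rule integrable_continuous_interval[OF cont])
      then show "h t \<ge> 0" unfolding j F_def
        by (rule integral_nonneg) (use rn in auto)
    qed
    have d: "(h has_real_derivative integral {0..1} (\<lambda>u. \<rho> u * u ^ j * (exp (- t * u) * (- u)))) (at t)"
      if t: "t > 0" for t
    proof -
      have "((\<lambda>t. integral (cbox 0 1) (\<lambda>u. \<rho> u * u ^ j * exp (- t * u))) has_field_derivative
              integral (cbox 0 1) (\<lambda>u. \<rho> u * u ^ j * (exp (- t * u) * (- u)))) (at t within {0<..})"
      proof (rule leibniz_rule_field_derivative)
        show "\<And>x u. x \<in> {0<..} \<Longrightarrow> u \<in> cbox 0 1 \<Longrightarrow>
          ((\<lambda>x. \<rho> u * u ^ j * exp (- x * u)) has_field_derivative \<rho> u * u ^ j * (exp (- x * u) * (- u))) (at x within {0<..})"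
          by (auto intro!: derivative_eq_intros)
        show "\<And>x. x \<in> {0<..} \<Longrightarrow> (\<lambda>u. \<rho> u * u ^ j * exp (- x * u)) integrable_on cbox 0 1"
          using cont by (auto intro!: integrable_continuous_interval)
        have r: "continuous_on ({0<..} \<times> {0..1}) (\<lambda>z::real\<times>real. \<rho> (snd z))"
          by (rule continuous_on_compose2[OF rc]) (auto intro!: continuous_intros)
        have "continuous_on ({0<..} \<times> {0..1}) (\<lambda>z::real\<times>real. \<rho> (snd z) * snd z ^ j * (exp (- fst z * snd z) * (- snd z)))"
          by (intro continuous_intros r)
        then show "continuous_on ({0<..} \<times> cbox 0 1) (\<lambda>(x, u). \<rho> u * u ^ j * (exp (- x * u) * (- u)))"
          by (simp add: case_prod_beta')
      qed (use t in auto)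
      then show ?thesis unfolding j F_def
        using t by (simp add: at_within_open[of t "{0<..}"])
    qed
    have e: "(\<lambda>t. - integral {0..1} (\<lambda>u. \<rho> u * u ^ j * (exp (- t * u) * (- u)))) = F (Suc j)"
    proof (rule ext)
      fix t
      have "- integral {0..1} (\<lambda>u. \<rho> u * u ^ j * (exp (- t * u) * (- u))) =
          integral {0..1} (\<lambda>u. - (\<rho> u * u ^ j * (exp (- t * u) * (- u))))"
        by (rule integral_neg[symmetric])
      also have "\<dots> = F (Suc j) t" unfolding F_def by (rule integral_cong) (simp add: algebra_simps)
      finally show "- integral {0..1} (\<lambda>u. \<rho> u * u ^ j * (exp (- t * u) * (- u))) = F (Suc j) t" .
    qed
    show "(\<forall>x>0. h x \<ge> 0) \<and> (\<exists>g'. (\<forall>x>0. (h has_real_derivative g' x) (at x)) \<and> (\<exists>j. (\<lambda>x. - g' x) = F j))"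
      apply (rule conjI[OF nn])
      apply (rule exI[where x="\<lambda>t. integral {0..1} (\<lambda>u. \<rho> u * u ^ j * (exp (- t * u) * (- u)))"])
      apply (rule conjI)
      using d apply blast
      using e by blast
  qed
qed

lemma cm_imp_cmono:
  assumes "cm f" shows "completely_monotonic f"
proof -
  have key: "\<exists>F. cm F \<and> (\<forall>x>0. (deriv ^^ n) f x = (-1) ^ n * F x)" for n
  proof (induction n)
    case 0 then show ?case using assms by (intro exI[of _ f]) auto
  next
    case (Suc n)
    then obtain F where F: "cm F" "\<forall>x>0. (deriv ^^ n) f x = (-1) ^ n * F x" by blast
    obtain F' where F': "\<forall>x>0. (F has_real_derivative F' x) (at x)" "cm (\<lambda>x. - F' x)"
      using cm_deriv[OF F(1)] by blast
    have "\<forall>x>0. (deriv ^^ Suc n) f x = (-1) ^ Suc n * (- F' x)"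
    proof (intro allI impI)
      fix x :: real assume x: "x > 0"
      have "((\<lambda>x. (-1) ^ n * F x) has_real_derivative (-1) ^ n * F' x) (at x)"
        using F'(1) x by (auto intro!: derivative_eq_intros)
      then have "((deriv ^^ n) f has_real_derivative (-1) ^ n * F' x) (at x)"
        by (rule has_field_derivative_transform_within_open[of _ _ _ "{0<..}"]) (use x F(2) in auto)
      then show "(deriv ^^ Suc n) f x = (-1) ^ Suc n * (- F' x)"
        using DERIV_imp_deriv by fastforce
    qed
    then show ?case using F'(2) by blast
  qed
  show ?thesis unfolding completely_monotonic_def
  proof (intro allI impI conjI)
    fix n :: nat and x :: real assume x: "x > 0"
    obtain F where F: "cm F" "\<forall>x>0. (deriv ^^ n) f x = (-1) ^ n * F x" using key by blast
    obtain F' where F': "\<forall>x>0. (F has_real_derivative F' x) (at x)" "cm (\<lambda>x. - F' x)"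
      using cm_deriv[OF F(1)] by blast
    have "((\<lambda>x. (-1) ^ n * F x) has_real_derivative (-1) ^ n * F' x) (at x)"
      using F'(1) x by (auto intro!: derivative_eq_intros)
    then have d: "((deriv ^^ n) f has_real_derivative (-1) ^ n * F' x) (at x)"
      by (rule has_field_derivative_transform_within_open[of _ _ _ "{0<..}"]) (use x F(2) in auto)
    then have "(deriv ^^ Suc n) f x = (-1) ^ n * F' x"
      using DERIV_imp_deriv by fastforce
    then show "((deriv ^^ n) f has_real_derivative (deriv ^^ Suc n) f x) (at x)" using d by simp
    have "(-1) ^ n * (deriv ^^ n) f x = F x" using F(2) x by (simp flip: power_mult_distrib)
    then show "(-1) ^ n * (deriv ^^ n) f x \<ge> 0" using cm_nonneg[OF F(1) x] by simp
  qed
qed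



definition Phi :: "real \<Rightarrow> real \<Rightarrow> real" where
  "Phi lam t = 1 / Gamma (lam - 1) * exp (-t) * (1 - exp (-t)) powr (lam - 2) * t powr (2 - lam)"

definition phi :: "real \<Rightarrow> real \<Rightarrow> real" where
  "phi lam t = Phi lam t * (1 + (lam - 2) / t - (lam - 2) * exp (-t) / (1 - exp (-t)))"

lemma lap_lin:
  fixes c t :: real
  assumes t: "t > 0"
  shows "integral {0..1} (\<lambda>u. (1 + c * u) * exp (- t * u)) =
     (1 - exp (-t)) / t + c * (1 - exp (-t)) / t^2 - c * exp (-t) / t"
proof -
  define F where "F (u::real) = - (1 + c * u) * exp (- t * u) / t - c * exp (- t * u) / t^2" for u
  have "((\<lambda>u. (1 + c * u) * exp (- t * u)) has_integral (F 1 - F 0)) {0..1}"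
  proof (rule fundamental_theorem_of_calculus[of 0 1 F "\<lambda>u. (1 + c * u) * exp (- t * u)"])
    fix u :: real assume "u \<in> {0..1}"
    have "(F has_real_derivative (1 + c * u) * exp (- t * u)) (at u)"
      unfolding F_def using t
      by (auto intro!: derivative_eq_intros simp: field_simps power2_eq_square)
    then show "(F has_vector_derivative (1 + c * u) * exp (- t * u)) (at u within {0..1})"
      by (simp add: has_real_derivative_iff_has_vector_derivative has_vector_derivative_at_within)
  qed simp
  then have "integral {0..1} (\<lambda>u. (1 + c * u) * exp (- t * u)) = F 1 - F 0"
    by (rule integral_unique)
  also have "\<dots> = (1 - exp (-t)) / t + c * (1 - exp (-t)) / t^2 - c * exp (-t) / t"
    unfolding F_def using t by (simp add: field_simps power2_eq_square)
  finally show ?thesis .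
qed

lemma cm_lap_lin:
  assumes "c \<ge> -1"
  shows "cm (\<lambda>t. integral {0..1} (\<lambda>u. (1 + c * u) * exp (- t * u)))"
proof (rule cm_laplace01)
  show "continuous_on {0..1} (\<lambda>u::real. 1 + c * u)" by (intro continuous_intros)
  show "\<forall>u\<in>{0..1}. 0 \<le> 1 + c * (u::real)"
  proof
    fix u :: real assume u: "u \<in> {0..1}"
    show "0 \<le> 1 + c * u"
    proof (cases "c \<ge> 0")
      case True then show ?thesis using u by simp
    next
      case False
      then have "c * u \<ge> c * 1" using u by (intro mult_left_mono_neg) auto
      then show ?thesis using assms by simp
    qed
  qed
qed

lemma cm_psi:
  assumes lam: "lam > 1"
  shows "cm (\<lambda>t. t powr (-3) * phi lam t)"
proof -
  define p where "p = lam - 2"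
  define m where "m = nat \<lceil>p\<rceil>"
  define C where "C = 1 / Gamma (lam - 1)"
  have C0: "C \<ge> 0" unfolding C_def using lam by simp
  have m1: "real m \<ge> p" unfolding m_def by linarith
  have m2: "real m < lam" unfolding m_def p_def using lam by linarith
  define K0 where "K0 (t::real) = integral {0..1} (\<lambda>u. (1 + 0 * u) * exp (- t * u))" for t
  define L where "L (t::real) = integral {0..1} (\<lambda>u. (1 + p * u) * exp (- t * u))" for t
  define P where "P (t::real) = C * exp (- 1 * t) * (\<lambda>y. y powr (- (real m + 1 - p))) (1 - exp (- t)) *
      t powr (- (lam - real m)) * K0 t ^ m * L t" for t
  have cmD: "cm (\<lambda>t. (\<lambda>y. y powr (- (real m + 1 - p))) (1 - exp (- t)))"
  proof (rule cm_compose[where f="\<lambda>y. y powr (- (real m + 1 - p))" and g="\<lambda>t. 1 - exp (- t)" and g' = "\<lambda>t. exp (- 1 * t)"])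
    show "cm (\<lambda>y. y powr (- (real m + 1 - p)))" by (rule cm_powr) (use m1 in simp)
    show "\<forall>x>0. 0 < 1 - exp (- x::real)" by simp
    show "\<forall>x>0. ((\<lambda>t. 1 - exp (- t)) has_real_derivative exp (- 1 * x)) (at x)"
      by (auto intro!: derivative_eq_intros)
    show "cm (\<lambda>t. exp (- 1 * t))" by (rule cm_exp) simp
  qed
  have "cm P" unfolding P_def K0_def L_def
    by (intro cm_mult cm_const C0 cm_exp cmD cm_powr cm_power cm_lap_lin) (use m2 lam p_def in auto)
  then show ?thesis
  proof (rule cm_cong)
    fix t :: real assume t: "t > 0"
    define E where "E = exp (- t)"
    define D where "D = 1 - exp (- t)"
    have D: "D > 0" using t unfolding D_def by simp
    have "K0 t = (1 - exp (-t)) / t + 0 * (1 - exp (-t)) / t^2 - 0 * exp (-t) / t"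
      unfolding K0_def by (rule lap_lin[OF t])
    then have K0: "K0 t = D / t" unfolding D_def by simp
    have "L t = (1 - exp (-t)) / t + p * (1 - exp (-t)) / t^2 - p * exp (-t) / t"
      unfolding L_def by (rule lap_lin[OF t])
    then have "L t = D / t + p * D / t^2 - p * E / t" unfolding D_def E_def .
    also have "\<dots> = (D / t) * (1 + p / t - p * E / D)"
      using t D by (simp add: field_simps power2_eq_square)
    finally have L: "L t = (D / t) * (1 + p / t - p * E / D)" .
    have "P t = C * E * D powr (- (real m + 1 - p)) * t powr (- (lam - real m)) * ((D / t) ^ m * ((D / t) * (1 + p / t - p * E / D)))"
      unfolding P_def K0 L E_def D_def by (simp only: mult.assoc mult_minus1)
    also have "(D / t) ^ m * ((D / t) * (1 + p / t - p * E / D)) = (D ^ (m + 1) / t ^ (m + 1)) * (1 + p / t - p * E / D)"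
      by (simp add: power_divide ac_simps)
    also have "C * E * D powr (- (real m + 1 - p)) * t powr (- (lam - real m)) * ((D ^ (m + 1) / t ^ (m + 1)) * (1 + p / t - p * E / D))
       = C * E * (D powr (- (real m + 1 - p)) * D ^ (m + 1)) * (t powr (- (lam - real m)) / t ^ (m + 1)) * (1 + p / t - p * E / D)"
      by (simp add: algebra_simps)
    also have "D powr (- (real m + 1 - p)) * D ^ (m + 1) = D powr p"
    proof -
      have "D ^ (m + 1) = D powr (real (m + 1))" by (rule powr_realpow[OF D, symmetric])
      then have "D powr (- (real m + 1 - p)) * D ^ (m + 1) = D powr (- (real m + 1 - p)) * D powr (real (m + 1))"
        by (simp only:)
      also have "\<dots> = D powr (- (real m + 1 - p) + real (m + 1))" by (rule powr_add[symmetric])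
      also have "- (real m + 1 - p) + real (m + 1) = p" by simp
      finally show ?thesis .
    qed
    also have "t powr (- (lam - real m)) / t ^ (m + 1) = t powr (-3) * t powr (2 - lam)"
    proof -
      have "t ^ (m + 1) = t powr (real (m + 1))" by (rule powr_realpow[OF t, symmetric])
      then have "t powr (- (lam - real m)) / t ^ (m + 1) = t powr (- (lam - real m)) / t powr (real (m + 1))"
        by (simp only:)
      also have "\<dots> = t powr (- (lam - real m) - real (m + 1))" by (rule powr_diff[symmetric])
      also have "- (lam - real m) - real (m + 1) = -3 + (2 - lam)" by simp
      also have "t powr (-3 + (2 - lam)) = t powr (-3) * t powr (2 - lam)" by (rule powr_add)
      finally show ?thesis .
    qed
    finally have X: "P t = C * E * D powr p * (t powr (-3) * t powr (2 - lam)) * (1 + p / t - p * E / D)" .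
    show "P t = t powr (-3) * phi lam t"
      unfolding phi_def Phi_def X C_def E_def D_def p_def by (simp only: ac_simps)
  qed
qed



lemma Phi_alg:
  fixes C e A B D t p :: real
  assumes "D \<noteq> 0" "t \<noteq> 0"
  shows "C * ((- e) * A * B + e * (p * (A / D) * e) * B + e * A * ((- p) * (B / t))) =
         - (C * e * A * B * (1 + p / t - p * e / D))"
  using assms by (simp add: field_simps)

lemma Phi_deriv:
  assumes t: "t > 0"
  shows "(Phi lam has_real_derivative - phi lam t) (at t)"
proof -
  define D where "D = 1 - exp (- t)"
  have D: "D > 0" using t unfolding D_def by simp
  have dD: "((\<lambda>t. 1 - exp (- t)) has_real_derivative exp (- t)) (at t)"
    by (auto intro!: derivative_eq_intros)
  have "((\<lambda>t. (1 - exp (- t)) powr (lam - 2)) has_real_derivative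
      (lam - 2) * (1 - exp (- t)) powr (lam - 2 - 1) * exp (- t)) (at t)"
    by (rule DERIV_chain2[OF has_real_derivative_powr dD]) (use D D_def in simp)
  also have "(1 - exp (- t)) powr (lam - 2 - 1) = D powr (lam - 2) / D"
  proof -
    have "(1 - exp (- t)) powr (lam - 2 - 1) = D powr (lam - 2) / D powr 1" unfolding D_def by (rule powr_diff)
    then show ?thesis using D by simp
  qed
  finally have dA: "((\<lambda>t. (1 - exp (- t)) powr (lam - 2)) has_real_derivative
      (lam - 2) * (D powr (lam - 2) / D) * exp (- t)) (at t)" .
  have "((\<lambda>t. t powr (2 - lam)) has_real_derivative (2 - lam) * t powr (2 - lam - 1)) (at t)"
    by (rule has_real_derivative_powr[OF t])
  also have "t powr (2 - lam - 1) = t powr (2 - lam) / t"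
  proof -
    have "t powr (2 - lam - 1) = t powr (2 - lam) / t powr 1" by (rule powr_diff)
    then show ?thesis using t by simp
  qed
  finally have dB: "((\<lambda>t. t powr (2 - lam)) has_real_derivative (2 - lam) * (t powr (2 - lam) / t)) (at t)" .
  have dE: "((\<lambda>t. exp (- t)) has_real_derivative - exp (- t)) (at t)"
    by (auto intro!: derivative_eq_intros)
  have "((\<lambda>t. 1 / Gamma (lam - 1) * (exp (- t) * (1 - exp (- t)) powr (lam - 2) * t powr (2 - lam))) has_real_derivative
      1 / Gamma (lam - 1) * (((- exp (- t)) * D powr (lam - 2) + ((lam - 2) * (D powr (lam - 2) / D) * exp (- t)) * exp (- t)) * t powr (2 - lam)
        + ((2 - lam) * (t powr (2 - lam) / t)) * (exp (- t) * D powr (lam - 2)))) (at t)"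
    using DERIV_cmult[OF DERIV_mult[OF DERIV_mult[OF dE dA] dB], of "1 / Gamma (lam - 1)"] unfolding D_def .
  also have "1 / Gamma (lam - 1) * (((- exp (- t)) * D powr (lam - 2) + ((lam - 2) * (D powr (lam - 2) / D) * exp (- t)) * exp (- t)) * t powr (2 - lam)
        + ((2 - lam) * (t powr (2 - lam) / t)) * (exp (- t) * D powr (lam - 2))) = - (1 / Gamma (lam - 1) * exp (- t) * D powr (lam - 2) * t powr (2 - lam) *
       (1 + (lam - 2) / t - (lam - 2) * exp (- t) / D))"
    using Phi_alg[of D t "1 / Gamma (lam - 1)" "exp (- t)" "D powr (lam - 2)" "t powr (2 - lam)" "lam - 2"] D t
    by (simp add: algebra_simps)
  finally show ?thesis unfolding phi_def Phi_def D_def by (simp only: mult.assoc)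
qed



lemma indef_deriv:
  fixes f :: "real \<Rightarrow> real"
  assumes "f integrable_on {a..b}" "a < y" "y < b" "isCont f y"
  shows "((\<lambda>z. integral {a..z} f) has_real_derivative f y) (at y)"
proof -
  have "((\<lambda>u. integral {a..u} f) has_vector_derivative f y) (at y within ({a..b} - {}))"
    by (rule integral_has_vector_derivative_continuous_at)
       (use assms in \<open>auto intro: continuous_at_imp_continuous_at_within\<close>)
  then show ?thesis
    using assms by (simp add: has_real_derivative_iff_has_vector_derivative at_within_Icc_at)
qed

lemma gamma_integrand_has_integral:
  fixes b :: real
  assumes "b > 0"
  shows "((\<lambda>t. exp (- t) * t powr (b - 1)) has_integral Gamma b) {0..}"
proof -
  have "((\<lambda>t. t powr (b - 1) / exp t) has_integral Gamma b) {0..}"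
    by (rule Gamma_integral_real[OF assms])
  moreover have "(\<lambda>t. t powr (b - 1) / exp t) = (\<lambda>t. exp (- t) * t powr (b - 1))"
    by (simp add: fun_eq_iff exp_minus field_simps)
  ultimately show ?thesis by simp
qed

lemma lig_integrable:
  fixes b y :: real
  assumes "b > 0" "y \<ge> 0"
  shows "(\<lambda>t. exp (- t) * t powr (b - 1)) integrable_on {0..y}"
  by (rule integrable_on_subinterval[of _ "{0..}"])
     (use gamma_integrand_has_integral[OF assms(1)] in auto)

lemma lig_nonneg: "b > 0 \<Longrightarrow> y \<ge> 0 \<Longrightarrow> lower_inc_gamma b y \<ge> 0"
  unfolding lower_inc_gamma_def by (rule integral_nonneg[OF lig_integrable]) auto

lemma lig_le: "b > 0 \<Longrightarrow> y \<ge> 0 \<Longrightarrow> lower_inc_gamma b y \<le> Gamma b"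
  unfolding lower_inc_gamma_def
  using integral_subset_le[of "{0..y}" "{0..}" "\<lambda>t. exp (- t) * t powr (b - 1)"]
    lig_integrable[of b y] gamma_integrand_has_integral[of b]
  by (auto simp: integrable_on_def integral_unique)

lemma lig_cont: "b > 0 \<Longrightarrow> c \<ge> 0 \<Longrightarrow> continuous_on {0..c} (lower_inc_gamma b)"
  unfolding lower_inc_gamma_def
  by (rule indefinite_integral_continuous_1[OF lig_integrable]) auto

lemma lig_0: "lower_inc_gamma b 0 = 0"
  unfolding lower_inc_gamma_def by simp

lemma lig_deriv:
  fixes b y :: real
  assumes "b > 0" "y > 0"
  shows "(lower_inc_gamma b has_real_derivative exp (- y) * y powr (b - 1)) (at y)"
proof -
  have "((\<lambda>z. integral {0..z} (\<lambda>t. exp (- t) * t powr (b - 1))) has_real_derivative exp (- y) * y powr (b - 1)) (at y)"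
    by (rule indef_deriv[OF lig_integrable[of b "y + 1"]]) (use assms in \<open>auto intro!: continuous_intros\<close>)
  then show ?thesis unfolding lower_inc_gamma_def[abs_def] .
qed

definition IB :: "real \<Rightarrow> real \<Rightarrow> real \<Rightarrow> real" where
  "IB p x v = integral {0..v} (\<lambda>s. s powr p * (1 - s) powr x)"

lemma IB_has_integral:
  fixes p x :: real
  assumes "p > -1" "x > 0"
  shows "((\<lambda>s. s powr p * (1 - s) powr x) has_integral Beta (p + 1) (x + 1)) {0..1}"
  using has_integral_Beta_real[of "p + 1" "x + 1"] assms by simp

lemma IB_1: "(p::real) > -1 \<Longrightarrow> x > 0 \<Longrightarrow> IB p x 1 = Beta (p + 1) (x + 1)"
  unfolding IB_def using IB_has_integral by (rule integral_unique)

lemma IB_0: "IB p x 0 = 0"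
  unfolding IB_def by simp

lemma IB_cont: "(p::real) > -1 \<Longrightarrow> x > 0 \<Longrightarrow> continuous_on {0..1} (IB p x)"
  unfolding IB_def[abs_def]
  by (rule indefinite_integral_continuous_1) (use IB_has_integral in blast)

lemma IB_deriv:
  fixes p x v :: real
  assumes "p > -1" "x > 0" "0 < v" "v < 1"
  shows "(IB p x has_real_derivative v powr p * (1 - v) powr x) (at v)"
proof -
  have "((\<lambda>z. integral {0..z} (\<lambda>s. s powr p * (1 - s) powr x)) has_real_derivative v powr p * (1 - v) powr x) (at v)"
    by (rule indef_deriv[of _ 0 1]) (use assms IB_has_integral in \<open>auto intro!: continuous_intros\<close>)
  then show ?thesis unfolding IB_def[abs_def] .
qed



lemma Phi_lim0: "(Phi lam \<longlongrightarrow> 1 / Gamma (lam - 1)) (at_right 0)"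
  unfolding Phi_def by real_asymp

lemma Phi_limtop: "(Phi lam \<longlongrightarrow> 0) at_top"
  unfolding Phi_def by real_asymp

lemma Phi_nonneg: "t > 0 \<Longrightarrow> lam > 1 \<Longrightarrow> Phi lam t \<ge> 0"
  unfolding Phi_def by simp

lemma phi_nonneg:
  assumes "lam > 1" "t > 0" shows "phi lam t \<ge> 0"
proof -
  have "t powr (-3) * phi lam t \<ge> 0" using cm_nonneg[OF cm_psi[OF assms(1)] assms(2)] by simp
  moreover have "t powr (-3) > 0" using assms by simp
  ultimately show ?thesis by (simp add: zero_le_mult_iff)
qed

lemma phi_isCont:
  assumes "t > 0" shows "isCont (phi lam) t"
proof -
  have "isCont (Phi lam) t" using Phi_deriv[OF assms] by (rule DERIV_isCont)
  moreover have "1 - exp (- t) \<noteq> 0" using assms by simp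
  ultimately show ?thesis unfolding phi_def[abs_def] using assms
    by (intro continuous_intros) auto
qed

lemma key_identity:
  fixes x t lam :: real
  assumes x: "x > 0" and t: "t > 0"
  shows "exp (- (x * t)) * (x * t) powr (lam - 1 - 1) * x * Phi lam t =
    1 / Gamma (lam - 1) * x powr (lam - 1) * ((1 - exp (- t)) powr (lam - 2) * (1 - (1 - exp (- t))) powr x * exp (- t))"
proof -
  have e1: "(1 - (1 - exp (- t))) powr x = exp (- (x * t))"
    by (simp add: powr_def)
  have e2: "(x * t) powr (lam - 1 - 1) = x powr (lam - 2) * t powr (lam - 2)"
    using x t by (simp add: powr_mult)
  have e3: "x powr (lam - 2) * x = x powr (lam - 1)"
  proof -
    have "x powr (lam - 2) * x powr 1 = x powr (lam - 2 + 1)" by (rule powr_add[symmetric])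
    then show ?thesis using x by simp
  qed
  have e4: "t powr (lam - 2) * t powr (2 - lam) = 1"
  proof -
    have "t powr (lam - 2) * t powr (2 - lam) = t powr (lam - 2 + (2 - lam))" by (rule powr_add[symmetric])
    then show ?thesis using t by simp
  qed
  have "exp (- (x * t)) * (x * t) powr (lam - 1 - 1) * x * Phi lam t =
     1 / Gamma (lam - 1) * (x powr (lam - 2) * x) * ((1 - exp (- t)) powr (lam - 2) * (1 - (1 - exp (- t))) powr x * exp (- t))
       * (t powr (lam - 2) * t powr (2 - lam))"
    unfolding e1 e2 Phi_def by (simp add: ac_simps)
  then show ?thesis unfolding e3 e4 by simp
qed



lemma main_integral:
  assumes lam: "lam > 1" and x: "x > 0"
  shows "((\<lambda>t. lower_inc_gamma (lam - 1) (x * t) * phi lam t) has_integral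
           (x powr lam * Gamma x / Gamma (lam + x))) {0<..}"
proof -
  define C where "C = 1 / Gamma (lam - 1)"
  define I where "I t = lower_inc_gamma (lam - 1) (x * t) * phi lam t" for t
  define F where "F t = - (lower_inc_gamma (lam - 1) (x * t) * Phi lam t) + C * x powr (lam - 1) * IB (lam - 2) x (1 - exp (- t))" for t
  have b0: "lam - 1 > 0" using lam by simp
  have p1: "lam - 2 > -1" using lam by simp
  have deriv: "(F has_real_derivative I t) (at t)" if t: "t > 0" for t
  proof -
    have d1: "((\<lambda>t. lower_inc_gamma (lam - 1) (x * t)) has_real_derivative
              exp (- (x * t)) * (x * t) powr (lam - 1 - 1) * x) (at t)"
    proof (rule DERIV_chain2[OF lig_deriv[OF b0]])
      show "0 < x * t" using x t by simp
      show "((*) x has_real_derivative x) (at t)" by (auto intro!: derivative_eq_intros)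
    qed
    have d3: "((\<lambda>t. IB (lam - 2) x (1 - exp (- t))) has_real_derivative
              ((1 - exp (- t)) powr (lam - 2) * (1 - (1 - exp (- t))) powr x) * exp (- t)) (at t)"
    proof (rule DERIV_chain2[OF IB_deriv[OF p1 x]])
      show "0 < 1 - exp (- t)" "1 - exp (- t) < 1" using t by auto
      show "((\<lambda>t. 1 - exp (- t)) has_real_derivative exp (- t)) (at t)" by (auto intro!: derivative_eq_intros)
    qed
    have "(F has_real_derivative
        - (exp (- (x * t)) * (x * t) powr (lam - 1 - 1) * x * Phi lam t + (- phi lam t) * lower_inc_gamma (lam - 1) (x * t))
        + C * x powr (lam - 1) * (((1 - exp (- t)) powr (lam - 2) * (1 - (1 - exp (- t))) powr x) * exp (- t))) (at t)"
      unfolding F_def[abs_def]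
      by (intro DERIV_add DERIV_minus DERIV_mult d1 Phi_deriv[OF t] DERIV_cmult d3)
    moreover have "- (exp (- (x * t)) * (x * t) powr (lam - 1 - 1) * x * Phi lam t + (- phi lam t) * lower_inc_gamma (lam - 1) (x * t))
        + C * x powr (lam - 1) * (((1 - exp (- t)) powr (lam - 2) * (1 - (1 - exp (- t))) powr x) * exp (- t)) = I t"
      unfolding I_def using key_identity[OF x t, of lam] by (simp add: C_def)
    ultimately show ?thesis by simp
  qed
  have nonneg: "I t \<ge> 0" if "t > 0" for t
    unfolding I_def using that x lig_nonneg[OF b0, of "x * t"] phi_nonneg[OF lam that] by simp
  have cont: "isCont I t" if t: "t > 0" for t
  proof -
    have "isCont (\<lambda>t. lower_inc_gamma (lam - 1) (x * t)) t"
      by (rule DERIV_isCont, rule DERIV_chain2[OF lig_deriv[OF b0]])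
         (use x t in \<open>auto intro!: derivative_eq_intros\<close>)
    then show ?thesis unfolding I_def[abs_def] by (intro continuous_intros phi_isCont t)
  qed
  have G0: "((\<lambda>t. lower_inc_gamma (lam - 1) (x * t)) \<longlongrightarrow> 0) (at_right 0)"
  proof -
    have "((\<lambda>t. lower_inc_gamma (lam - 1) (x * t)) \<longlongrightarrow> lower_inc_gamma (lam - 1) 0) (at_right 0)"
    proof (rule continuous_on_tendsto_compose[OF lig_cont[OF b0, of x]])
      show "((*) x \<longlongrightarrow> 0) (at_right 0)" by (auto intro!: tendsto_eq_intros)
      show "0 \<in> {0..x}" using x by simp
      have "\<forall>\<^sub>F t in at_right 0. t < (1::real)" unfolding eventually_at_right_field by (auto intro!: exI[of _ 1])
      moreover have "\<forall>\<^sub>F t in at_right 0. t > (0::real)" unfolding eventually_at_right_field by (auto intro!: exI[of _ 1])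
      ultimately show "\<forall>\<^sub>F t in at_right 0. x * t \<in> {0..x}"
        by eventually_elim (use x in auto)
    qed (use x in simp)
    then show ?thesis by (simp add: lig_0)
  qed
  have IB0: "((\<lambda>t. IB (lam - 2) x (1 - exp (- t))) \<longlongrightarrow> 0) (at_right 0)"
  proof -
    have "((\<lambda>t. IB (lam - 2) x (1 - exp (- t))) \<longlongrightarrow> IB (lam - 2) x 0) (at_right 0)"
    proof (rule continuous_on_tendsto_compose[OF IB_cont[OF p1 x]])
      show "((\<lambda>t. 1 - exp (- t)) \<longlongrightarrow> 0) (at_right (0::real))" by real_asymp
      show "\<forall>\<^sub>F t in at_right 0. 1 - exp (- t) \<in> {0..1::real}"
        unfolding eventually_at_right_field by (auto intro!: exI[of _ 1])
    qed simp
    then show ?thesis by (simp add: IB_0)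
  qed
  have IBtop: "((\<lambda>t. IB (lam - 2) x (1 - exp (- t))) \<longlongrightarrow> Beta (lam - 1) (x + 1)) at_top"
  proof -
    have "((\<lambda>t. IB (lam - 2) x (1 - exp (- t))) \<longlongrightarrow> IB (lam - 2) x 1) at_top"
    proof (rule continuous_on_tendsto_compose[OF IB_cont[OF p1 x]])
      show "((\<lambda>t::real. 1 - exp (- t)) \<longlongrightarrow> 1) at_top" by real_asymp
      show "\<forall>\<^sub>F t in at_top. 1 - exp (- t) \<in> {0..1::real}"
        by (rule eventually_mono[OF eventually_gt_at_top[of 0]]) auto
    qed simp
    then show ?thesis using IB_1[OF p1 x] by simp
  qed
  have GPtop: "((\<lambda>t. lower_inc_gamma (lam - 1) (x * t) * Phi lam t) \<longlongrightarrow> 0) at_top"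
  proof (rule tendsto_sandwich[where f="\<lambda>_. 0" and h="\<lambda>t. Gamma (lam - 1) * Phi lam t"])
    have ev: "\<forall>\<^sub>F t in at_top. t > (0::real)" by (rule eventually_gt_at_top)
    show "\<forall>\<^sub>F t in at_top. 0 \<le> lower_inc_gamma (lam - 1) (x * t) * Phi lam t"
      using ev by eventually_elim (use x lam lig_nonneg[OF b0] Phi_nonneg in auto)
    show "\<forall>\<^sub>F t in at_top. lower_inc_gamma (lam - 1) (x * t) * Phi lam t \<le> Gamma (lam - 1) * Phi lam t"
      using ev by eventually_elim (use x lam lig_le[OF b0] Phi_nonneg in \<open>auto intro!: mult_right_mono\<close>)
    show "((\<lambda>t. Gamma (lam - 1) * Phi lam t) \<longlongrightarrow> 0) at_top"
      using tendsto_mult[OF tendsto_const Phi_limtop, of "Gamma (lam - 1)" lam] by simp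
  qed simp
  have F0: "(F \<longlongrightarrow> 0) (at_right 0)"
  proof -
    have "(F \<longlongrightarrow> - (0 * (1 / Gamma (lam - 1))) + C * x powr (lam - 1) * 0) (at_right 0)"
      unfolding F_def[abs_def]
      by (intro tendsto_intros G0 Phi_lim0 IB0)
    then show ?thesis by simp
  qed
  have Ftop: "(F \<longlongrightarrow> C * x powr (lam - 1) * Beta (lam - 1) (x + 1)) at_top"
  proof -
    have "(F \<longlongrightarrow> - (0::real) + C * x powr (lam - 1) * Beta (lam - 1) (x + 1)) at_top"
      unfolding F_def[abs_def] using GPtop
      by (intro tendsto_intros IBtop) (simp add: mult.assoc)
    then show ?thesis by simp
  qed
  have h1: "(0::ereal) < \<infinity>" by simp
  have h2: "\<And>t. 0 < ereal t \<Longrightarrow> ereal t < \<infinity> \<Longrightarrow> DERIV F t :> I t"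
    using deriv by (simp add: zero_ereal_def)
  have h3: "\<And>t. 0 < ereal t \<Longrightarrow> ereal t < \<infinity> \<Longrightarrow> isCont I t"
    using cont by (simp add: zero_ereal_def)
  have h4: "AE t in lborel. 0 < ereal t \<longrightarrow> ereal t < \<infinity> \<longrightarrow> 0 \<le> I t"
    using nonneg by (simp add: zero_ereal_def)
  have h5: "((F \<circ> real_of_ereal) \<longlongrightarrow> 0) (at_right 0)"
    using F0 by (simp add: zero_ereal_def ereal_tendsto_simps)
  have h6: "((F \<circ> real_of_ereal) \<longlongrightarrow> C * x powr (lam - 1) * Beta (lam - 1) (x + 1)) (at_left \<infinity>)"
    using Ftop by (simp add: ereal_tendsto_simps)
  note ftc = interval_integral_FTC_nonneg[OF h1 h2 h3 h4 h5 h6]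
  have S: "einterval 0 \<infinity> = {0<..}" by (simp add: zero_ereal_def)
  have "(I has_integral (LINT t : einterval 0 \<infinity> | lborel. I t)) {0<..}"
    using set_borel_integral_eq_integral[OF ftc(1)] unfolding S
    by (simp add: integrable_integral)
  moreover have "(LINT t : einterval 0 \<infinity> | lborel. I t) = (LBINT t=0..\<infinity>. I t)"
    by (simp add: interval_lebesgue_integral_def)
  moreover have "C * x powr (lam - 1) * Beta (lam - 1) (x + 1) = x powr lam * Gamma x / Gamma (lam + x)"
  proof -
    have g1: "Gamma (x + 1) = x * Gamma x" using Gamma_plus1[of x] x nonpos_Ints_nonpos[of x] by fastforce
    have g2: "Gamma (lam - 1) > 0" using b0 by simp
    have g3: "x powr (lam - 1) * x = x powr lam"
    proof -
      have "x powr (lam - 1) * x powr 1 = x powr (lam - 1 + 1)" by (rule powr_add[symmetric])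
      then show ?thesis using x by simp
    qed
    have "C * x powr (lam - 1) * Beta (lam - 1) (x + 1) = (x powr (lam - 1) * x) * Gamma x / Gamma (lam + x)"
      unfolding C_def Beta_def g1 using g2 by (simp add: field_simps)
    then show ?thesis unfolding g3 .
  qed
  ultimately show ?thesis using ftc(2) unfolding I_def[abs_def] by simp
qed


theorem proposition3p4:
  fixes lam :: real
  assumes "lam > 1"
  shows "(\<lambda>x. x powr lam * Gamma x / Gamma (lam + x)) \<in> T_class (lam - 1) (-3)"
proof -
  have cmo: "completely_monotonic_order (-3) (phi lam)"
    unfolding completely_monotonic_order_def by (rule cm_imp_cmono[OF cm_psi[OF assms]])
  show ?thesis
    unfolding T_class_def
    apply (rule CollectI)
    apply (rule exI[of _ 0], rule exI[of _ 0], rule exI[of _ "phi lam"])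
    using cmo main_integral[OF assms] by simp
qed

end
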